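(* Assume $\sigma$ is $1$-Lipschitz and $M_2<\infty$. Let $\bar w=(\bar w_1,\bar w_2)\in\mathsf W$ be a minimizer of $w\mapsto\|f_w-f_{\mathbf P}\|_{\mathbb L_2(\mu)}$ over $\mathsf W$, and let $p=p_1\otimes p_2=\mathcal N(\bar w_1,\tau_1^2\mathbf I_{D_0D_1})\otimes\mathcal N(\bar w_2,\tau_2^2\mathbf I_{D_1D_2})$ with $\tau_1,\tau_2>0$. Then, with $G_2(w_1)=\|f_{w_1,\bar w_2}-f_{\bar w}\|^2_{\mathbb L_2(\mu)}$, $$\int G_2(w_1)\,p_1(dw_1)\le D_0\big(M_2\tau_1\|\bar w_2\|_{1,2}\big)^2\le C_1D_0D_1\tau_1^2,\qquad C_1=(M_2\|\bar w_2\|_F)^2.$$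
   Context: $\mathcal X\subset\mathbb R^{D_0}$ Borel, $\mu$ a $\sigma$-finite measure on $\mathcal X$, $M_2^2=D_0^{-1}\int\|x\|_2^2\mu(dx)$, $\|f\|^2_{\mathbb L_2(\mu)}=\int\|f(x)\|_2^2\mu(dx)$, $f_{\mathbf P}\in\mathbb L_2(\mu)$ a given target. Parameters $w=(w_1,w_2)\in\mathsf W=\mathbb R^{D_0\times D_1}\times\mathbb R^{D_1\times D_2}$; $f_w=f_{w_1,w_2}$, $f_w(x)=w_2^\top\bar\sigma(w_1^\top x)$, $\bar\sigma$ coordinatewise. $\|\cdot\|_F$ is the Frobenius norm and, for $\bar w_2=(\bar w_{2,ij})\in\mathbb R^{D_1\times D_2}$, $\|\bar w_2\|_{1,2}=\big(\sum_{j=1}^{D_2}(\sum_{i=1}^{D_1}|\bar w_{2,ij}|)^2\big)^{1/2}$. $1$-Lipschitz means $|\sigma(u)-\sigma(u')|\le|u-u'|$. *)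

theory Defs
  imports "HOL-Probability.Probability"
begin

text \<open>Two-layer network f_w(x) = w2^T sigma(w1^T x), with w1 a D0 x D1 matrix
  (rows indexed by 'd0, columns by 'd1) and w2 a D1 x D2 matrix.\<close>
definition nn :: "(real \<Rightarrow> real) \<Rightarrow> real^'d1^'d0 \<Rightarrow> real^'d2^'d1 \<Rightarrow> real^'d0 \<Rightarrow> real^'d2" where
  "nn \<sigma> w1 w2 x = transpose w2 *v (\<chi> i. \<sigma> ((transpose w1 *v x) $ i))"

definition L2sq :: "'a measure \<Rightarrow> ('a \<Rightarrow> real^'d) \<Rightarrow> ennreal" where
  "L2sq \<mu> f = (\<integral>\<^sup>+ x. ennreal ((norm (f x))\<^sup>2) \<partial>\<mu>)"

definition M2 :: "(real^'d0) measure \<Rightarrow> real" where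
  "M2 \<mu> = sqrt ((1 / real CARD('d0)) * (\<integral> x. (norm x)\<^sup>2 \<partial>\<mu>))"

definition frob_norm :: "real^'n^'m \<Rightarrow> real" where
  "frob_norm w = sqrt (\<Sum>i\<in>UNIV. \<Sum>j\<in>UNIV. (w $ i $ j)\<^sup>2)"

definition norm12 :: "real^'n^'m \<Rightarrow> real" where
  "norm12 w = sqrt (\<Sum>j\<in>UNIV. (\<Sum>i\<in>UNIV. \<bar>w $ i $ j\<bar>)\<^sup>2)"

definition gauss_mat :: "real^'n^'m \<Rightarrow> real \<Rightarrow> (real^'n^'m) measure" where
  "gauss_mat m \<tau> = density lborel
     (\<lambda>w. ennreal (\<Prod>i\<in>UNIV. \<Prod>j\<in>UNIV. normal_density (m $ i $ j) \<tau> (w $ i $ j)))"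

end

theory Submission
  imports Defs
begin

lemma vn_meas[measurable]: "(\<lambda>w::real^'n. w $ k) \<in> borel_measurable borel"
  by (intro borel_measurable_continuous_onI continuous_intros)
lemma vnn_meas[measurable]: "(\<lambda>w::real^'n^'m. w $ k $ i) \<in> borel_measurable borel"
  by (intro borel_measurable_continuous_onI continuous_intros)

lemma integral_lborel_prod:
  fixes f :: "'a::euclidean_space \<Rightarrow> real \<Rightarrow> real"
  assumes int: "\<And>b. b \<in> Basis \<Longrightarrow> integrable lborel (f b)"
  shows "integrable lborel (\<lambda>x::'a. \<Prod>b\<in>Basis. f b (x \<bullet> b))"
    and "(\<integral>x. (\<Prod>b\<in>Basis. f b (x \<bullet> b)) \<partial>(lborel::'a measure)) = (\<Prod>b\<in>Basis. (\<integral>x. f b x \<partial>lborel))"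
proof -
  interpret product_sigma_finite "\<lambda>_::'a. (lborel::real measure)"
    by standard
  have m: "(\<lambda>g. \<Sum>b\<in>Basis. g b *\<^sub>R b) \<in> measurable (\<Pi>\<^sub>M b\<in>(Basis::'a set). (lborel::real measure)) borel"
    by measurable
  have fm: "(\<lambda>x::'a. \<Prod>b\<in>Basis. f b (x \<bullet> b)) \<in> borel_measurable borel"
    using int by measurable
  have eq: "\<And>g. g \<in> space (\<Pi>\<^sub>M b\<in>(Basis::'a set). (lborel::real measure)) \<Longrightarrow>
     (\<Prod>b\<in>Basis. f b ((\<Sum>b'\<in>Basis. g b' *\<^sub>R b') \<bullet> b)) = (\<Prod>b\<in>Basis. f b (g b))"
    by (intro prod.cong refl) (simp add: inner_sum_left inner_Basis if_distrib sum.delta cong: if_cong)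
  have i1: "integrable (\<Pi>\<^sub>M b\<in>(Basis::'a set). lborel) (\<lambda>g. \<Prod>b\<in>Basis. f b (g b))"
    by (rule product_integrable_prod) (auto intro: int)
  show "integrable lborel (\<lambda>x::'a. \<Prod>b\<in>Basis. f b (x \<bullet> b))"
    apply (subst lborel_eq)
    apply (subst integrable_distr_eq[OF m fm])
    apply (rule Bochner_Integration.integrable_cong[THEN iffD2, OF refl _ i1])
    using eq by simp
  show "(\<integral>x. (\<Prod>b\<in>Basis. f b (x \<bullet> b)) \<partial>(lborel::'a measure)) = (\<Prod>b\<in>Basis. (\<integral>x. f b x \<partial>lborel))"
    apply (subst lborel_eq)
    apply (subst integral_distr[OF m fm])
    apply (subst Bochner_Integration.integral_cong[OF refl eq], assumption)
    by (rule product_integral_prod) (auto intro: int)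
qed

definition hb :: "'m \<times> 'n \<Rightarrow> real^'n^'m" where "hb p = axis (fst p) (axis (snd p) 1)"

lemma hb_inj: "inj hb"
  unfolding hb_def inj_def by (auto simp: axis_eq_axis)

lemma hb_Basis: "Basis = range (hb :: 'm \<times> 'n \<Rightarrow> real^'n^'m)"
proof
  show "Basis \<subseteq> range (hb :: 'm \<times> 'n \<Rightarrow> real^'n^'m)"
  proof
    fix b :: "real^'n^'m" assume "b \<in> Basis"
    then obtain k i where "b = axis k (axis i 1)" by (auto simp: Basis_vec_def)
    then have "b = hb (k, i)" by (simp add: hb_def)
    then show "b \<in> range hb" by blast
  qed
qed (auto simp: hb_def Basis_vec_def)

lemma hb_inner: "(w::real^'n^'m) \<bullet> hb (k, i) = w $ k $ i"
  by (simp add: hb_def inner_axis)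

lemma prod_Basis_mat: "(\<Prod>b\<in>(Basis::(real^'n^'m) set). F b) = (\<Prod>k\<in>UNIV. \<Prod>i\<in>UNIV. F (hb (k, i)))"
proof -
  have "(\<Prod>b\<in>(Basis::(real^'n^'m) set). F b) = (\<Prod>p\<in>UNIV. F (hb p))"
    by (subst hb_Basis, subst prod.reindex[OF hb_inj]) simp
  also have "\<dots> = (\<Prod>p\<in>UNIV \<times> UNIV. F (hb p))" by simp
  also have "\<dots> = (\<Prod>k\<in>UNIV. \<Prod>i\<in>UNIV. F (hb (k, i)))"
    by (simp add: prod.cartesian_product case_prod_beta')
  finally show ?thesis .
qed

lemma integral_mat_prod:
  fixes g :: "'m::finite \<Rightarrow> 'n::finite \<Rightarrow> real \<Rightarrow> real"
  assumes int: "\<And>k i. integrable lborel (g k i)"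
  shows "integrable lborel (\<lambda>w::real^'n^'m. \<Prod>k\<in>UNIV. \<Prod>i\<in>UNIV. g k i (w$k$i))"
    and "(\<integral>w. (\<Prod>k\<in>UNIV. \<Prod>i\<in>UNIV. g k i (w$k$i)) \<partial>(lborel::(real^'n^'m) measure)) = (\<Prod>k\<in>UNIV. \<Prod>i\<in>UNIV. (\<integral>t. g k i t \<partial>lborel))"
proof -
  define f where "f b = case_prod g (inv (hb :: 'm \<times> 'n \<Rightarrow> real^'n^'m) b)" for b
  have fh: "f (hb (k,i)) = g k i" for k i
    by (simp add: f_def inv_f_f[OF hb_inj])
  have fi: "b \<in> Basis \<Longrightarrow> integrable lborel (f b)" for b
    using int by (auto simp: hb_Basis fh)
  have e: "(\<Prod>b\<in>Basis. f b (w \<bullet> b)) = (\<Prod>k\<in>UNIV. \<Prod>i\<in>UNIV. g k i (w$k$i))" for w :: "real^'n^'m"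
    by (simp add: prod_Basis_mat fh hb_inner)
  show "integrable lborel (\<lambda>w::real^'n^'m. \<Prod>k\<in>UNIV. \<Prod>i\<in>UNIV. g k i (w$k$i))"
    using integral_lborel_prod(1)[of f, OF fi] e by simp
  show "(\<integral>w. (\<Prod>k\<in>UNIV. \<Prod>i\<in>UNIV. g k i (w$k$i)) \<partial>(lborel::(real^'n^'m) measure)) = (\<Prod>k\<in>UNIV. \<Prod>i\<in>UNIV. (\<integral>t. g k i t \<partial>lborel))"
    using integral_lborel_prod(2)[of f, OF fi] e by (simp add: prod_Basis_mat fh)
qed

definition rho :: "real^'n^'m \<Rightarrow> real \<Rightarrow> real^'n^'m \<Rightarrow> real" where
  "rho m \<tau> w = (\<Prod>i\<in>UNIV. \<Prod>j\<in>UNIV. normal_density (m $ i $ j) \<tau> (w $ i $ j))"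

lemma normal_mom:
  assumes "\<tau> > 0"
  shows "integrable lborel (\<lambda>t. normal_density c \<tau> t * (t - c) ^ n)"
    and "n = 0 \<Longrightarrow> (\<integral>t. normal_density c \<tau> t * (t - c) ^ n \<partial>lborel) = 1"
    and "n = 1 \<Longrightarrow> (\<integral>t. normal_density c \<tau> t * (t - c) ^ n \<partial>lborel) = 0"
    and "n = 2 \<Longrightarrow> (\<integral>t. normal_density c \<tau> t * (t - c) ^ n \<partial>lborel) = \<tau>\<^sup>2"
  using integrable_normal_moment[OF assms] apply simp
  using integral_normal_density[OF assms] apply simp
  using integral_normal_moment_odd[OF assms, of c 0] apply simp
  using integral_normal_moment_even[OF assms, of c 1] by simp

lemma pow_if: "(x::real) ^ (if c then 1 else 0) = (if c then x else 1)" by simp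

lemma prod2_delta:
  fixes x :: "'m::finite \<Rightarrow> 'n::finite \<Rightarrow> real"
  shows "(\<Prod>a\<in>UNIV. \<Prod>b\<in>UNIV. (x a b) ^ (if a = k \<and> b = i then 1 else 0)) = x k i"
proof -
  have "(\<Prod>b\<in>UNIV. (x a b :: real) ^ (if a = k \<and> b = i then 1 else 0)) = (if a = k then x k i else 1)" for a
    by (cases "a = k") (simp_all add: pow_if prod.delta)
  then show ?thesis by (simp add: prod.delta)
qed

lemma prod2_delta':
  fixes k :: "'m::finite" and i :: "'n::finite"
  shows "(\<Prod>a\<in>UNIV. \<Prod>b\<in>UNIV. (if a = k \<and> b = i then x else (1::real))) = x"
  using prod2_delta[of "\<lambda>a b. x" k i] by (simp add: pow_if)

lemma gauss_moment2:
  fixes m :: "real^'n^'m"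
  assumes tp: "\<tau> > 0"
  shows "integrable lborel (\<lambda>w. rho m \<tau> w * ((w$k$i - m$k$i) * (w$k'$i' - m$k'$i')))"
    and "(\<integral>w. rho m \<tau> w * ((w$k$i - m$k$i) * (w$k'$i' - m$k'$i')) \<partial>lborel) = (if k = k' \<and> i = i' then \<tau>\<^sup>2 else 0)"
proof -
  define n where "n a b = (if a = k \<and> b = i then 1 else 0) + (if a = k' \<and> b = i' then 1 else (0::nat))" for a b
  define g where "g a b t = normal_density (m$a$b) \<tau> t * (t - m$a$b) ^ n a b" for a b t
  have gi: "integrable lborel (g a b)" for a b
    unfolding g_def by (rule normal_mom(1)[OF tp])
  have e: "(\<Prod>a\<in>UNIV. \<Prod>b\<in>UNIV. g a b (w$a$b)) = rho m \<tau> w * ((w$k$i - m$k$i) * (w$k'$i' - m$k'$i'))" for w :: "real^'n^'m"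
    unfolding g_def rho_def n_def
    by (simp add: prod.distrib power_add prod2_delta[where x="\<lambda>a b. w$a$b - m$a$b"])
  show "integrable lborel (\<lambda>w. rho m \<tau> w * ((w$k$i - m$k$i) * (w$k'$i' - m$k'$i')))"
    using integral_mat_prod(1)[of g, OF gi] e by simp
  have "(\<integral>w. rho m \<tau> w * ((w$k$i - m$k$i) * (w$k'$i' - m$k'$i')) \<partial>lborel) = (\<Prod>a\<in>UNIV. \<Prod>b\<in>UNIV. (\<integral>t. g a b t \<partial>lborel))"
    using integral_mat_prod(2)[of g, OF gi] e by simp
  also have "\<dots> = (if k = k' \<and> i = i' then \<tau>\<^sup>2 else 0)"
  proof (cases "k = k' \<and> i = i'")
    case True
    have "(\<integral>t. g a b t \<partial>lborel) = (if a = k \<and> b = i then \<tau>\<^sup>2 else 1)" for a b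
    proof -
      have nn: "n a b = (if a = k \<and> b = i then 2 else 0)" using True by (simp add: n_def)
      show ?thesis
      proof (cases "a = k \<and> b = i")
        case True
        then show ?thesis unfolding g_def nn if_P[OF True] using normal_mom(4)[OF tp, of 2 "m$a$b"] by simp
      next
        case False
        then show ?thesis unfolding g_def nn if_not_P[OF False] using normal_mom(2)[OF tp, of 0 "m$a$b"] by simp
      qed
    qed
    then show ?thesis using True by (simp only: prod2_delta') simp
  next
    case False
    have z: "(\<integral>t. g k i t \<partial>lborel) = 0"
      unfolding g_def using False by (intro normal_mom(3)[OF tp]) (auto simp: n_def)
    have "(\<Prod>b\<in>UNIV. (\<integral>t. g k b t \<partial>lborel)) = 0"
      by (rule prod_zero) (use z in auto)
    then have "(\<Prod>a\<in>UNIV. \<Prod>b\<in>UNIV. (\<integral>t. g a b t \<partial>lborel)) = 0"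
      by (intro prod_zero) auto
    then show ?thesis unfolding if_not_P[OF False] .
  qed
  finally show "(\<integral>w. rho m \<tau> w * ((w$k$i - m$k$i) * (w$k'$i' - m$k'$i')) \<partial>lborel) = (if k = k' \<and> i = i' then \<tau>\<^sup>2 else 0)" .
qed

definition zf :: "real^'n^'m \<Rightarrow> real^'n^'m \<Rightarrow> real^'m \<Rightarrow> 'n \<Rightarrow> real" where
  "zf m w x i = (\<Sum>k\<in>UNIV. (w$k$i - m$k$i) * x$k)"

lemma norm_sq_vec: "(norm (v::real^'n))\<^sup>2 = (\<Sum>j\<in>UNIV. (v$j)\<^sup>2)"
  unfolding norm_vec_def L2_set_def by (simp add: sum_nonneg)

lemma gauss_z2:
  fixes m :: "real^'n^'m" and x :: "real^'m"
  assumes tp: "\<tau> > 0"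
  shows "integrable lborel (\<lambda>w. rho m \<tau> w * (zf m w x i)\<^sup>2)"
    and "(\<integral>w. rho m \<tau> w * (zf m w x i)\<^sup>2 \<partial>lborel) = \<tau>\<^sup>2 * (norm x)\<^sup>2"
proof -
  have e: "rho m \<tau> w * (zf m w x i)\<^sup>2 = (\<Sum>k\<in>UNIV. \<Sum>k'\<in>UNIV. (x$k * x$k') * (rho m \<tau> w * ((w$k$i - m$k$i) * (w$k'$i - m$k'$i))))" for w
  proof -
    have "(zf m w x i)\<^sup>2 = (\<Sum>k\<in>UNIV. \<Sum>k'\<in>UNIV. ((w$k$i - m$k$i) * x$k) * ((w$k'$i - m$k'$i) * x$k'))"
      unfolding zf_def power2_eq_square sum_product ..
    then show ?thesis
      by (simp add: sum_distrib_left algebra_simps)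
  qed
  show "integrable lborel (\<lambda>w. rho m \<tau> w * (zf m w x i)\<^sup>2)"
    unfolding e by (intro Bochner_Integration.integrable_sum integrable_mult_right) (rule gauss_moment2(1)[OF tp])
  have "(\<integral>w. rho m \<tau> w * (zf m w x i)\<^sup>2 \<partial>lborel) = (\<Sum>k\<in>UNIV. \<Sum>k'\<in>UNIV. (x$k * x$k') * (if k = k' \<and> i = i then \<tau>\<^sup>2 else 0))"
    unfolding e
    by (simp add: Bochner_Integration.integral_sum Bochner_Integration.integrable_sum gauss_moment2[OF tp] del: if_P)
  also have "\<dots> = \<tau>\<^sup>2 * (norm x)\<^sup>2"
    by (simp add: norm_sq_vec sum_distrib_left if_distrib cong: if_cong) (simp add: power2_eq_square mult_ac)
  finally show "(\<integral>w. rho m \<tau> w * (zf m w x i)\<^sup>2 \<partial>lborel) = \<tau>\<^sup>2 * (norm x)\<^sup>2" .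
qed

definition Hf :: "real^'n^'m \<Rightarrow> real^'p^'n \<Rightarrow> real^'n^'m \<Rightarrow> real^'m \<Rightarrow> real" where
  "Hf m v w x = (\<Sum>j\<in>UNIV. (\<Sum>i\<in>UNIV. \<bar>v$i$j\<bar>) * (\<Sum>i\<in>UNIV. \<bar>v$i$j\<bar> * (zf m w x i)\<^sup>2))"

lemma gauss_H:
  fixes m :: "real^'n^'m" and v :: "real^'p^'n" and x :: "real^'m"
  assumes tp: "\<tau> > 0"
  shows "integrable lborel (\<lambda>w. rho m \<tau> w * Hf m v w x)"
    and "(\<integral>w. rho m \<tau> w * Hf m v w x \<partial>lborel) = \<tau>\<^sup>2 * (norm x)\<^sup>2 * (\<Sum>j\<in>UNIV. (\<Sum>i\<in>UNIV. \<bar>v$i$j\<bar>)\<^sup>2)"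
proof -
  have e: "rho m \<tau> w * Hf m v w x = (\<Sum>j\<in>UNIV. (\<Sum>i\<in>UNIV. \<bar>v$i$j\<bar>) * (\<Sum>i\<in>UNIV. \<bar>v$i$j\<bar> * (rho m \<tau> w * (zf m w x i)\<^sup>2)))" for w
    unfolding Hf_def by (simp add: sum_distrib_left mult_ac)
  show "integrable lborel (\<lambda>w. rho m \<tau> w * Hf m v w x)"
    unfolding e by (intro Bochner_Integration.integrable_sum integrable_mult_right) (rule gauss_z2(1)[OF tp])
  have "(\<integral>w. rho m \<tau> w * Hf m v w x \<partial>lborel) = (\<Sum>j\<in>UNIV. (\<Sum>i\<in>UNIV. \<bar>v$i$j\<bar>) * (\<Sum>i\<in>UNIV. \<bar>v$i$j\<bar> * (\<tau>\<^sup>2 * (norm x)\<^sup>2)))"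
    unfolding e
    by (simp add: Bochner_Integration.integral_sum Bochner_Integration.integrable_sum gauss_z2[OF tp])
  also have "\<dots> = \<tau>\<^sup>2 * (norm x)\<^sup>2 * (\<Sum>j\<in>UNIV. (\<Sum>i\<in>UNIV. \<bar>v$i$j\<bar>)\<^sup>2)"
    by (simp add: sum_distrib_left sum_distrib_right[symmetric] power2_eq_square mult_ac)
  finally show "(\<integral>w. rho m \<tau> w * Hf m v w x \<partial>lborel) = \<tau>\<^sup>2 * (norm x)\<^sup>2 * (\<Sum>j\<in>UNIV. (\<Sum>i\<in>UNIV. \<bar>v$i$j\<bar>)\<^sup>2)" .
qed

lemma wcs:
  fixes a t :: "'i \<Rightarrow> real"
  assumes "\<And>i. i \<in> S \<Longrightarrow> a i \<ge> 0"
  shows "(\<Sum>i\<in>S. a i * t i)\<^sup>2 \<le> (\<Sum>i\<in>S. a i) * (\<Sum>i\<in>S. a i * (t i)\<^sup>2)"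
proof -
  have "(\<Sum>i\<in>S. sqrt (a i) * (sqrt (a i) * t i))\<^sup>2 \<le> (\<Sum>i\<in>S. (sqrt (a i))\<^sup>2) * (\<Sum>i\<in>S. (sqrt (a i) * t i)\<^sup>2)"
    by (rule Cauchy_Schwarz_ineq_sum)
  also have "(\<Sum>i\<in>S. sqrt (a i) * (sqrt (a i) * t i)) = (\<Sum>i\<in>S. a i * t i)"
    using assms by (intro sum.cong refl) (simp add: mult.assoc[symmetric])
  also have "(\<Sum>i\<in>S. (sqrt (a i))\<^sup>2) = (\<Sum>i\<in>S. a i)"
    using assms by (intro sum.cong refl) simp
  also have "(\<Sum>i\<in>S. (sqrt (a i) * t i)\<^sup>2) = (\<Sum>i\<in>S. a i * (t i)\<^sup>2)"
    using assms by (intro sum.cong refl) (simp add: power_mult_distrib)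
  finally show ?thesis .
qed

lemma nn_comp: "nn \<sigma> w v x $ j = (\<Sum>i\<in>UNIV. v$i$j * \<sigma> (\<Sum>k\<in>UNIV. w$k$i * x$k))"
  by (simp add: nn_def matrix_vector_mult_def transpose_def mult.commute)

lemma pointwise:
  assumes lip: "\<And>u u'. \<bar>\<sigma> u - \<sigma> u'\<bar> \<le> \<bar>u - u'\<bar>"
  shows "(norm (nn \<sigma> w v x - nn \<sigma> m v x))\<^sup>2 \<le> Hf m v w x"
proof -
  define d where "d i = \<sigma> (\<Sum>k\<in>UNIV. w$k$i * x$k) - \<sigma> (\<Sum>k\<in>UNIV. m$k$i * x$k)" for i
  have dz: "\<bar>d i\<bar> \<le> \<bar>zf m w x i\<bar>" for i
  proof -
    have "(\<Sum>k\<in>UNIV. w$k$i * x$k) - (\<Sum>k\<in>UNIV. m$k$i * x$k) = zf m w x i"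
      unfolding zf_def by (simp add: sum_subtractf[symmetric] left_diff_distrib)
    then show ?thesis unfolding d_def using lip by metis
  qed
  have comp: "(nn \<sigma> w v x - nn \<sigma> m v x) $ j = (\<Sum>i\<in>UNIV. v$i$j * d i)" for j
    by (simp add: nn_comp d_def sum_subtractf[symmetric] right_diff_distrib)
  have bj: "((nn \<sigma> w v x - nn \<sigma> m v x) $ j)\<^sup>2 \<le> (\<Sum>i\<in>UNIV. \<bar>v$i$j\<bar>) * (\<Sum>i\<in>UNIV. \<bar>v$i$j\<bar> * (zf m w x i)\<^sup>2)" for j
  proof -
    have "((nn \<sigma> w v x - nn \<sigma> m v x) $ j)\<^sup>2 = \<bar>\<Sum>i\<in>UNIV. v$i$j * d i\<bar>\<^sup>2"
      by (simp only: comp power2_abs)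
    also have "\<dots> \<le> (\<Sum>i\<in>UNIV. \<bar>v$i$j\<bar> * \<bar>d i\<bar>)\<^sup>2"
      by (rule power_mono) (auto intro: order_trans[OF sum_abs] simp: abs_mult)
    also have "\<dots> \<le> (\<Sum>i\<in>UNIV. \<bar>v$i$j\<bar>) * (\<Sum>i\<in>UNIV. \<bar>v$i$j\<bar> * \<bar>d i\<bar>\<^sup>2)"
      by (rule wcs) simp
    also have "\<dots> \<le> (\<Sum>i\<in>UNIV. \<bar>v$i$j\<bar>) * (\<Sum>i\<in>UNIV. \<bar>v$i$j\<bar> * (zf m w x i)\<^sup>2)"
    proof -
      have dd: "\<bar>v$i$j\<bar> * \<bar>d i\<bar>\<^sup>2 \<le> \<bar>v$i$j\<bar> * (zf m w x i)\<^sup>2" for i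
      proof -
        have "\<bar>d i\<bar>\<^sup>2 \<le> \<bar>zf m w x i\<bar>\<^sup>2" by (rule power_mono[OF dz]) simp
        then show ?thesis by (intro mult_left_mono) simp_all
      qed
      show ?thesis by (intro mult_left_mono sum_mono dd) (simp_all add: sum_nonneg)
    qed
    finally show ?thesis .
  qed
  show ?thesis
    unfolding norm_sq_vec Hf_def by (intro sum_mono bj)
qed

lemma norm12_frob: "(norm12 (w::real^'n^'m))\<^sup>2 \<le> real CARD('m) * (frob_norm w)\<^sup>2"
proof -
  have "(norm12 w)\<^sup>2 = (\<Sum>j\<in>UNIV. (\<Sum>i\<in>UNIV. 1 * \<bar>w $ i $ j\<bar>)\<^sup>2)"
    unfolding norm12_def by (simp add: sum_nonneg)
  also have "\<dots> \<le> (\<Sum>j\<in>UNIV. real CARD('m) * (\<Sum>i\<in>UNIV. (w $ i $ j)\<^sup>2))"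
  proof (rule sum_mono)
    fix j
    have "(\<Sum>i\<in>UNIV. 1 * \<bar>w $ i $ j\<bar>)\<^sup>2 \<le> (\<Sum>i\<in>(UNIV::'m set). (1::real)\<^sup>2) * (\<Sum>i\<in>UNIV. \<bar>w $ i $ j\<bar>\<^sup>2)"
      by (rule Cauchy_Schwarz_ineq_sum)
    then show "(\<Sum>i\<in>UNIV. 1 * \<bar>w $ i $ j\<bar>)\<^sup>2 \<le> real CARD('m) * (\<Sum>i\<in>UNIV. (w $ i $ j)\<^sup>2)"
      by simp
  qed
  also have "\<dots> = real CARD('m) * (frob_norm w)\<^sup>2"
    unfolding frob_norm_def by (simp add: sum_nonneg sum_distrib_left[symmetric] sum.swap[of _ "UNIV::'n set"])
  finally show ?thesis .
qed

theorem lemma3: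
  fixes X :: "(real^'d0) set" and \<mu> :: "(real^'d0) measure"
    and \<sigma> :: "real \<Rightarrow> real" and fP :: "real^'d0 \<Rightarrow> real^'d2"
    and wb1 :: "real^'d1^'d0" and wb2 :: "real^'d2^'d1"
    and \<tau>1 \<tau>2 :: real
  assumes X_borel: "X \<in> sets borel"
    and \<mu>_sets: "sets \<mu> = sets (restrict_space borel X)"
    and \<mu>_sfin: "sigma_finite_measure \<mu>"
    and \<sigma>_lip: "\<And>u u'. \<bar>\<sigma> u - \<sigma> u'\<bar> \<le> \<bar>u - u'\<bar>"
    and M2_fin: "(\<integral>\<^sup>+ x. ennreal ((norm x)\<^sup>2) \<partial>\<mu>) < \<infinity>"
    and fP_meas: "fP \<in> borel_measurable \<mu>"
    and fP_L2: "L2sq \<mu> fP < \<infinity>"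
    and minimizer: "\<And>(w1::real^'d1^'d0) (w2::real^'d2^'d1). L2sq \<mu> (\<lambda>x. nn \<sigma> wb1 wb2 x - fP x)
                              \<le> L2sq \<mu> (\<lambda>x. nn \<sigma> w1 w2 x - fP x)"
    and \<tau>1_pos: "\<tau>1 > 0" and \<tau>2_pos: "\<tau>2 > 0"
  shows "(\<integral>\<^sup>+ w1. L2sq \<mu> (\<lambda>x. nn \<sigma> w1 wb2 x - nn \<sigma> wb1 wb2 x) \<partial>(gauss_mat wb1 \<tau>1))
           \<le> ennreal (real CARD('d0) * (M2 \<mu> * \<tau>1 * norm12 wb2)\<^sup>2)
       \<and> real CARD('d0) * (M2 \<mu> * \<tau>1 * norm12 wb2)\<^sup>2
           \<le> (M2 \<mu> * frob_norm wb2)\<^sup>2 * real CARD('d0) * real CARD('d1) * \<tau>1\<^sup>2"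
proof -
  let ?P = "gauss_mat wb1 \<tau>1"
  let ?C = "\<Sum>j\<in>UNIV. (\<Sum>i\<in>UNIV. \<bar>wb2$i$j\<bar>)\<^sup>2"
  let ?I = "\<integral> x. (norm x)\<^sup>2 \<partial>\<mu>"
  define H where "H w x = Hf wb1 wb2 w x" for w x
  have mu_meas: "measurable \<mu> N = measurable (restrict_space borel X) N" for N :: "'b measure"
    by (rule measurable_cong_sets[OF \<mu>_sets refl])
  have xk_meas[measurable]: "(\<lambda>x. x $ k) \<in> borel_measurable \<mu>" for k
    unfolding mu_meas by (rule measurable_restrict_space1) (rule vn_meas)
  have nx_meas[measurable]: "(\<lambda>x::real^'d0. (norm x)\<^sup>2) \<in> borel_measurable \<mu>"
    unfolding mu_meas by (rule measurable_restrict_space1) measurable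
  have rho_meas[measurable]: "rho wb1 \<tau>1 \<in> borel_measurable borel"
    unfolding rho_def by measurable
  have rho_nn: "rho wb1 \<tau>1 w \<ge> 0" for w
    unfolding rho_def by (intro prod_nonneg) auto
  have H_nn: "H w x \<ge> 0" for w x
    unfolding H_def Hf_def by (intro sum_nonneg mult_nonneg_nonneg) auto
  have P_eq: "?P = density lborel (\<lambda>w. ennreal (rho wb1 \<tau>1 w))"
    unfolding gauss_mat_def rho_def ..
  have Hm[measurable]: "(\<lambda>p. H (fst p) (snd p)) \<in> borel_measurable (lborel \<Otimes>\<^sub>M \<mu>)"
    unfolding H_def Hf_def zf_def by measurable
  have Hm2[measurable]: "(\<lambda>x. H w x) \<in> borel_measurable \<mu>" for w
    unfolding H_def Hf_def zf_def by measurable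
  interpret mu: sigma_finite_measure \<mu> by (rule \<mu>_sfin)
  interpret pair_sigma_finite "lborel :: (real^'d1^'d0) measure" \<mu>
    unfolding pair_sigma_finite_def using sigma_finite_lborel \<mu>_sfin by simp
  have S1: "L2sq \<mu> (\<lambda>x. nn \<sigma> w wb2 x - nn \<sigma> wb1 wb2 x) \<le> (\<integral>\<^sup>+x. ennreal (H w x) \<partial>\<mu>)" for w
    unfolding L2sq_def H_def by (intro nn_integral_mono ennreal_leI pointwise[OF \<sigma>_lip])
  have inner_meas: "(\<lambda>w. \<integral>\<^sup>+x. ennreal (H w x) \<partial>\<mu>) \<in> borel_measurable lborel"
    by measurable
  have fixedx: "(\<integral>\<^sup>+w. ennreal (rho wb1 \<tau>1 w * H w x) \<partial>lborel) = ennreal (\<tau>1\<^sup>2 * ?C) * ennreal ((norm x)\<^sup>2)" for x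
  proof -
    have "(\<integral>\<^sup>+w. ennreal (rho wb1 \<tau>1 w * H w x) \<partial>lborel) = ennreal (\<integral>w. rho wb1 \<tau>1 w * H w x \<partial>lborel)"
      unfolding H_def
      by (rule nn_integral_eq_integral[OF gauss_H(1)[OF \<tau>1_pos]]) (use rho_nn H_nn in \<open>auto simp: H_def\<close>)
    also have "\<dots> = ennreal (\<tau>1\<^sup>2 * ?C * (norm x)\<^sup>2)"
      unfolding H_def gauss_H(2)[OF \<tau>1_pos] by (simp add: mult_ac)
    finally show ?thesis by (simp add: ennreal_mult sum_nonneg)
  qed
  have intI: "integrable \<mu> (\<lambda>x. (norm x)\<^sup>2)"
    by (rule integrableI_bounded) (use M2_fin in simp_all)
  have nnI: "(\<integral>\<^sup>+x. ennreal ((norm x)\<^sup>2) \<partial>\<mu>) = ennreal ?I"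
    by (rule nn_integral_eq_integral[OF intI]) simp
  have "(\<integral>\<^sup>+ w1. L2sq \<mu> (\<lambda>x. nn \<sigma> w1 wb2 x - nn \<sigma> wb1 wb2 x) \<partial>?P) \<le> (\<integral>\<^sup>+w. (\<integral>\<^sup>+x. ennreal (H w x) \<partial>\<mu>) \<partial>?P)"
    by (rule nn_integral_mono) (rule S1)
  also have "\<dots> = (\<integral>\<^sup>+w. ennreal (rho wb1 \<tau>1 w) * (\<integral>\<^sup>+x. ennreal (H w x) \<partial>\<mu>) \<partial>lborel)"
    unfolding P_eq by (rule nn_integral_density) (use inner_meas in simp_all)
  also have "\<dots> = (\<integral>\<^sup>+w. (\<integral>\<^sup>+x. ennreal (rho wb1 \<tau>1 w * H w x) \<partial>\<mu>) \<partial>lborel)"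
    by (intro nn_integral_cong) (simp add: nn_integral_cmult[symmetric] ennreal_mult rho_nn H_nn)
  also have "\<dots> = (\<integral>\<^sup>+x. (\<integral>\<^sup>+w. ennreal (rho wb1 \<tau>1 w * H w x) \<partial>lborel) \<partial>\<mu>)"
    by (rule Fubini'[symmetric]) measurable
  also have "\<dots> = (\<integral>\<^sup>+x. ennreal (\<tau>1\<^sup>2 * ?C) * ennreal ((norm x)\<^sup>2) \<partial>\<mu>)"
    by (simp add: fixedx)
  also have "\<dots> = ennreal (\<tau>1\<^sup>2 * ?C) * ennreal ?I"
    by (simp add: nn_integral_cmult nnI)
  also have "\<dots> = ennreal (real CARD('d0) * (M2 \<mu> * \<tau>1 * norm12 wb2)\<^sup>2)"
  proof -
    have I0: "?I \<ge> 0" by (rule integral_nonneg_AE) simp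
    have "(M2 \<mu>)\<^sup>2 = ?I / real CARD('d0)" unfolding M2_def using I0 by simp
    moreover have "(norm12 wb2)\<^sup>2 = ?C" unfolding norm12_def by (simp add: sum_nonneg)
    ultimately have "real CARD('d0) * (M2 \<mu> * \<tau>1 * norm12 wb2)\<^sup>2 = \<tau>1\<^sup>2 * ?C * ?I"
      by (simp add: power_mult_distrib)
    then show ?thesis using I0 by (simp add: ennreal_mult[symmetric] sum_nonneg)
  qed
  finally have A: "(\<integral>\<^sup>+ w1. L2sq \<mu> (\<lambda>x. nn \<sigma> w1 wb2 x - nn \<sigma> wb1 wb2 x) \<partial>?P) \<le> ennreal (real CARD('d0) * (M2 \<mu> * \<tau>1 * norm12 wb2)\<^sup>2)" .
  have B: "real CARD('d0) * (M2 \<mu> * \<tau>1 * norm12 wb2)\<^sup>2 \<le> (M2 \<mu> * frob_norm wb2)\<^sup>2 * real CARD('d0) * real CARD('d1) * \<tau>1\<^sup>2"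
  proof -
    have "real CARD('d0) * (M2 \<mu> * \<tau>1 * norm12 wb2)\<^sup>2 = (real CARD('d0) * (M2 \<mu>)\<^sup>2 * \<tau>1\<^sup>2) * (norm12 wb2)\<^sup>2"
      by (simp add: power_mult_distrib)
    also have "\<dots> \<le> (real CARD('d0) * (M2 \<mu>)\<^sup>2 * \<tau>1\<^sup>2) * (real CARD('d1) * (frob_norm wb2)\<^sup>2)"
      by (intro mult_left_mono norm12_frob) simp
    also have "\<dots> = (M2 \<mu> * frob_norm wb2)\<^sup>2 * real CARD('d0) * real CARD('d1) * \<tau>1\<^sup>2"
      by (simp add: power_mult_distrib mult_ac)
    finally show ?thesis .
  qed
  show ?thesis using A B by blast
qed

end
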